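(* Let $\mathbb{K}=(G_{\mathbb{K}},M_{\mathbb{K}},I_{\mathbb{K}})$ and $\mathbb{S}=(G_{\mathbb{S}},M_{\mathbb{S}},I_{\mathbb{S}})$ be formal contexts and let $\sigma\colon G_{\mathbb{K}}\to G_{\mathbb{S}}$ be a map. Define $I_\sigma\subseteq G_{\mathbb{K}}\times M_{\mathbb{S}}$ by $I_\sigma=\{(g,\sigma(g))\mid g\in G_{\mathbb{K}}\}\circ I_{\mathbb{S}}$, i.e. $(g,m)\in I_\sigma$ iff $(\sigma(g),m)\in I_{\mathbb{S}}$, and let $\mathbb{A}=\mathbb{K}\mid (G_{\mathbb{K}},M_{\mathbb{S}},I_\sigma)$ be the apposition. Then $\sigma$ is an $\mathbb{S}$-measure of $\mathbb{A}$ and $\mathrm{id}_{G_{\mathbb{K}}}$ is a $\mathbb{K}$-measure of $\mathbb{A}$.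
   Context: A formal context is a triple $(G,M,I)$ with $G$ a non-empty finite set (objects), $M$ a finite set (attributes) and $I\subseteq G\times M$. For $A\subseteq G$ let $A'=\{m\in M\mid \forall a\in A: (a,m)\in I\}$ and for $B\subseteq M$ let $B'=\{g\in G\mid \forall b\in B:(g,b)\in I\}$. An extent of $(G,M,I)$ is a set $A\subseteq G$ with $A''=A$; $\mathrm{Ext}(G,M,I)$ denotes the set of all extents. For formal contexts $\mathbb{K}=(G,M,I)$ and $\mathbb{S}=(G_{\mathbb{S}},M_{\mathbb{S}},I_{\mathbb{S}})$, a map $\sigma\colon G\to G_{\mathbb{S}}$ is an $\mathbb{S}$-measure of $\mathbb{K}$ iff for every $A\in\mathrm{Ext}(\mathbb{S})$ the preimage $\sigma^{-1}(A)=\{g\in G\mid \sigma(g)\in A\}$ is in $\mathrm{Ext}(\mathbb{K})$. The apposition of two contexts $(G,M_1,I_1)$ and $(G,M_2,I_2)$ on the same object set is $(G, M_1\cup M_2, I_1\cup I_2)$, where if $M_1\cap M_2\neq\emptyset$ the attribute sets are first made disjoint (disjoint union). *)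

theory Defs
  imports Main
begin

type_synonym ('g, 'm) fcontext = "'g set \<times> 'm set \<times> ('g \<times> 'm) set"

definition formal_context :: "('g, 'm) fcontext \<Rightarrow> bool" where
  "formal_context K = (case K of (G, M, I) \<Rightarrow>
     G \<noteq> {} \<and> finite G \<and> finite M \<and> I \<subseteq> G \<times> M)"

definition obj_deriv :: "('g, 'm) fcontext \<Rightarrow> 'g set \<Rightarrow> 'm set" where
  "obj_deriv K A = (case K of (G, M, I) \<Rightarrow> {m \<in> M. \<forall>a\<in>A. (a, m) \<in> I})"

definition attr_deriv :: "('g, 'm) fcontext \<Rightarrow> 'm set \<Rightarrow> 'g set" where
  "attr_deriv K B = (case K of (G, M, I) \<Rightarrow> {g \<in> G. \<forall>b\<in>B. (g, b) \<in> I})"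

definition Ext :: "('g, 'm) fcontext \<Rightarrow> 'g set set" where
  "Ext K = {A. attr_deriv K (obj_deriv K A) = A}"

definition is_measure :: "('g, 'm) fcontext \<Rightarrow> ('h, 'n) fcontext \<Rightarrow> ('g \<Rightarrow> 'h) \<Rightarrow> bool" where
  "is_measure K S \<sigma> = (case K of (G, M, I) \<Rightarrow> case S of (GS, MS, IS) \<Rightarrow>
     (\<forall>g\<in>G. \<sigma> g \<in> GS) \<and> (\<forall>A\<in>Ext S. {g \<in> G. \<sigma> g \<in> A} \<in> Ext K))"

text \<open>Apposition of two contexts on the same object set (the object set of the first is used);
  attribute sets are made disjoint via the disjoint sum.\<close>
definition apposition :: "('g, 'm) fcontext \<Rightarrow> ('g, 'n) fcontext \<Rightarrow> ('g, 'm + 'n) fcontext" where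
  "apposition K1 K2 = (case K1 of (G, M1, I1) \<Rightarrow> case K2 of (G2, M2, I2) \<Rightarrow>
     (G, M1 <+> M2, {(g, Inl m) | g m. (g, m) \<in> I1} \<union> {(g, Inr m) | g m. (g, m) \<in> I2}))"

end

theory Submission
  imports Defs
begin

lemma ext_iff_sub:
  assumes "A \<subseteq> G" "\<And>g. g \<in> G \<Longrightarrow> \<forall>m\<in>M. (\<forall>a\<in>A. (a,m)\<in>I) \<longrightarrow> (g,m)\<in>I \<Longrightarrow> g \<in> A"
  shows "A \<in> Ext (G, M, I)"
  using assms unfolding Ext_def attr_deriv_def obj_deriv_def by auto

theorem proposition2:
  fixes GK :: "'g set" and MK :: "'m set" and IK :: "('g \<times> 'm) set"
    and GS :: "'h set" and MS :: "'n set" and IS :: "('h \<times> 'n) set"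
    and \<sigma> :: "'g \<Rightarrow> 'h"
  assumes "formal_context (GK, MK, IK)"
    and "formal_context (GS, MS, IS)"
    and "\<forall>g\<in>GK. \<sigma> g \<in> GS"
  defines "I\<sigma> \<equiv> {(g, m) | g m. g \<in> GK \<and> (\<sigma> g, m) \<in> IS}"
  defines "\<A> \<equiv> apposition (GK, MK, IK) (GK, MS, I\<sigma>)"
  shows "is_measure \<A> (GS, MS, IS) \<sigma> \<and> is_measure \<A> (GK, MK, IK) id"
proof -
  have IK: "IK \<subseteq> GK \<times> MK" using assms(1) by (simp add: formal_context_def)
  have IS: "IS \<subseteq> GS \<times> MS" using assms(2) by (simp add: formal_context_def)
  have AD: "\<A> = (GK, MK <+> MS, {(g, Inl m) | g m. (g, m) \<in> IK} \<union> {(g, Inr m) | g m. (g, m) \<in> I\<sigma>})"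
    unfolding \<A>_def apposition_def by simp
  have 1: "{g \<in> GK. \<sigma> g \<in> A} \<in> Ext \<A>" if "A \<in> Ext (GS, MS, IS)" for A
  proof -
    have Aeq: "A = {h \<in> GS. \<forall>n\<in>{n \<in> MS. \<forall>a\<in>A. (a, n) \<in> IS}. (h, n) \<in> IS}"
      using that unfolding Ext_def attr_deriv_def obj_deriv_def by simp
    show ?thesis unfolding AD
    proof (rule ext_iff_sub)
      fix g assume g: "g \<in> GK" and H: "\<forall>m\<in>MK <+> MS. (\<forall>a\<in>{g \<in> GK. \<sigma> g \<in> A}.
          (a, m) \<in> {(g, Inl m) | g m. (g, m) \<in> IK} \<union> {(g, Inr m) | g m. (g, m) \<in> I\<sigma>}) \<longrightarrow>
          (g, m) \<in> {(g, Inl m) | g m. (g, m) \<in> IK} \<union> {(g, Inr m) | g m. (g, m) \<in> I\<sigma>}"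
      have "\<sigma> g \<in> A"
      proof -
        have "(\<sigma> g, n) \<in> IS" if n: "n \<in> MS" "\<forall>a\<in>A. (a, n) \<in> IS" for n
        proof -
          have "Inr n \<in> MK <+> MS" using n by (simp add: Plus_def)
          moreover have "\<forall>a\<in>{g \<in> GK. \<sigma> g \<in> A}.
            (a, Inr n) \<in> {(g, Inl m) | g m. (g, m) \<in> IK} \<union> {(g, Inr m) | g m. (g, m) \<in> I\<sigma>}"
            using n unfolding I\<sigma>_def by auto
          ultimately have "(g, Inr n) \<in> {(g, Inl m) | g m. (g, m) \<in> IK} \<union> {(g, Inr m) | g m. (g, m) \<in> I\<sigma>}"
            using H by blast
          thus ?thesis unfolding I\<sigma>_def by auto
        qed
        hence "\<sigma> g \<in> {h \<in> GS. \<forall>n\<in>{n \<in> MS. \<forall>a\<in>A. (a, n) \<in> IS}. (h, n) \<in> IS}"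
          using g assms(3) by auto
        thus ?thesis using Aeq by blast
      qed
      thus "g \<in> {g \<in> GK. \<sigma> g \<in> A}" using g by simp
    qed auto
  qed
  have 2: "{g \<in> GK. id g \<in> A} \<in> Ext \<A>" if "A \<in> Ext (GK, MK, IK)" for A
  proof -
    have Aeq: "A = {h \<in> GK. \<forall>n\<in>{n \<in> MK. \<forall>a\<in>A. (a, n) \<in> IK}. (h, n) \<in> IK}"
      using that unfolding Ext_def attr_deriv_def obj_deriv_def by simp
    show ?thesis unfolding AD
    proof (rule ext_iff_sub)
      fix g assume g: "g \<in> GK" and H: "\<forall>m\<in>MK <+> MS. (\<forall>a\<in>{g \<in> GK. id g \<in> A}.
          (a, m) \<in> {(g, Inl m) | g m. (g, m) \<in> IK} \<union> {(g, Inr m) | g m. (g, m) \<in> I\<sigma>}) \<longrightarrow>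
          (g, m) \<in> {(g, Inl m) | g m. (g, m) \<in> IK} \<union> {(g, Inr m) | g m. (g, m) \<in> I\<sigma>}"
      have "(g, n) \<in> IK" if n: "n \<in> MK" "\<forall>a\<in>A. (a, n) \<in> IK" for n
      proof -
        have "Inl n \<in> MK <+> MS" using n by (simp add: Plus_def)
        moreover have "\<forall>a\<in>{g \<in> GK. id g \<in> A}.
          (a, Inl n) \<in> {(g, Inl m) | g m. (g, m) \<in> IK} \<union> {(g, Inr m) | g m. (g, m) \<in> I\<sigma>}"
          using n by auto
        ultimately have "(g, Inl n) \<in> {(g, Inl m) | g m. (g, m) \<in> IK} \<union> {(g, Inr m) | g m. (g, m) \<in> I\<sigma>}"
          using H by blast
        thus ?thesis by auto
      qed
      hence "g \<in> {h \<in> GK. \<forall>n\<in>{n \<in> MK. \<forall>a\<in>A. (a, n) \<in> IK}. (h, n) \<in> IK}"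
        using g by auto
      thus "g \<in> {g \<in> GK. id g \<in> A}" using Aeq by auto
    qed auto
  qed
  show ?thesis using 1 2 assms(3) unfolding AD is_measure_def by auto
qed

end
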